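(* Let $(\mathcal{X},\rho)$ be a bounded length space with finite doubling dimension $d$ and diameter $R$, equipped with a finite Borel measure $\nu$. For $\eta\in\mathcal{F}_0$, let $\mathfrak{b}$ be the box-counting dimension of $\partial_\eta\mathcal{X}$. Then for any $c>0$ there exists a constant $C>0$ such that for all $r>0$, \[\mathcal{N}_{\mathrm{ML},\eta}\big(\mathcal{X}\setminus(\partial_\eta\mathcal{X})^r\big)\le C R^{4d} r^{-(\mathfrak{b}+c)}.\]
   Context: A length space: $\rho(x,x')=\inf_\gamma\ell(\gamma)$ over continuous paths from $x$ to $x'$. Doubling dimension $d$: every open ball $B(x,r)$ can be covered by $2^d$ balls of radius $r/2$. $\mathrm{margin}_\eta(x)=\inf\{\rho(x,x'):\eta(x')\ne\eta(x)\}$; $\partial_\eta\mathcal{X}=\{x:\mathrm{margin}_\eta(x)=0\}$; $\mathcal{F}_0$ = measurable $\eta$ with $\nu(\partial_\eta\mathcal{X})=0$. $A^r=\bigcup_{x\in A}B(x,r)$. A set $U$ is mutually-labeling for $\eta$ if $\sup_{z,z'\in U}\rho(z,z')<\mathrm{margin}_\eta(x)$ for all $x\in U$; $\mathcal{N}_{\mathrm{ML},\eta}(V)$ is the minimal number of mutually-labeling sets covering $V$. $\mathcal{N}_r(A)$ is the minimal number of radius-$r$ balls covering $A$, and the box-counting dimension is $\mathfrak{b}(A)=\limsup_{r\to0}\log\mathcal{N}_r(A)/\log(1/r)$. *)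

theory Defs
  imports "HOL-Analysis.Analysis" "HOL-Probability.Probability"
begin

definition path_length :: "(real \<Rightarrow> 'a::metric_space) \<Rightarrow> ereal" where
  "path_length g = (SUP tn \<in> {(t, n). t 0 = 0 \<and> t n = 1 \<and> (\<forall>i<n. t i \<le> t (Suc i))}.
      ereal (\<Sum>i<snd tn. dist (g (fst tn i)) (g (fst tn (Suc i)))))"

definition length_space :: "'a::metric_space itself \<Rightarrow> bool" where
  "length_space _ \<longleftrightarrow> (\<forall>x y::'a. ereal (dist x y) =
      (INF g \<in> {g. path g \<and> pathstart g = x \<and> pathfinish g = y}. path_length g))"

definition doubling_dim :: "'a::metric_space itself \<Rightarrow> real \<Rightarrow> bool" where
  "doubling_dim _ d \<longleftrightarrow> (\<forall>(x::'a) r. r > 0 \<longrightarrow>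
      (\<exists>F. finite F \<and> real (card F) \<le> 2 powr d \<and> ball x r \<subseteq> (\<Union>y\<in>F. ball y (r/2))))"

definition margin :: "('a::metric_space \<Rightarrow> 'b) \<Rightarrow> 'a \<Rightarrow> ereal" where
  "margin \<eta> x = (INF x' \<in> {x'. \<eta> x' \<noteq> \<eta> x}. ereal (dist x x'))"

definition boundary :: "('a::metric_space \<Rightarrow> 'b) \<Rightarrow> 'a set" where
  "boundary \<eta> = {x. margin \<eta> x = 0}"

definition thicken :: "'a::metric_space set \<Rightarrow> real \<Rightarrow> 'a set" where
  "thicken A r = (\<Union>x\<in>A. ball x r)"

definition mutually_labeling :: "('a::metric_space \<Rightarrow> 'b) \<Rightarrow> 'a set \<Rightarrow> bool" where
  "mutually_labeling \<eta> U \<longleftrightarrow>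
     (\<forall>x\<in>U. (SUP z\<in>U. SUP z'\<in>U. ereal (dist z z')) < margin \<eta> x)"

definition N_ML :: "('a::metric_space \<Rightarrow> 'b) \<Rightarrow> 'a set \<Rightarrow> ereal" where
  "N_ML \<eta> V = (INF F \<in> {F. finite F \<and> (\<forall>U\<in>F. mutually_labeling \<eta> U) \<and> V \<subseteq> \<Union>F}.
      ereal (real (card F)))"

definition covering_number :: "real \<Rightarrow> 'a::metric_space set \<Rightarrow> ereal" where
  "covering_number r A = (INF F \<in> {F. finite F \<and> A \<subseteq> (\<Union>x\<in>F. ball x r)}.
      ereal (real (card F)))"

definition box_dim :: "'a::metric_space set \<Rightarrow> ereal" where
  "box_dim A = Limsup (at_right 0) (\<lambda>r.
      if covering_number r A = \<infinity> then \<infinity>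
      else ereal (ln (real_of_ereal (covering_number r A)) / ln (1 / r)))"

end

theory Submission
  imports Defs
begin

definition cov :: "('a::metric_space \<Rightarrow> 'b) \<Rightarrow> 'a set \<Rightarrow> real \<Rightarrow> bool" where
  "cov \<eta> V K \<longleftrightarrow> (\<exists>F. finite F \<and> (\<forall>U\<in>F. mutually_labeling \<eta> U) \<and> V \<subseteq> \<Union>F \<and> real (card F) \<le> K)"

lemma cov_N_ML: "cov \<eta> V K \<Longrightarrow> N_ML \<eta> V \<le> ereal K"
proof -
  assume "cov \<eta> V K"
  then obtain F where F: "finite F" "\<forall>U\<in>F. mutually_labeling \<eta> U" "V \<subseteq> \<Union>F" "real (card F) \<le> K"
    unfolding cov_def by blast
  have "N_ML \<eta> V \<le> ereal (real (card F))"
    unfolding N_ML_def by (rule INF_lower) (use F in auto)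
  also have "\<dots> \<le> ereal K" using F by simp
  finally show ?thesis .
qed

lemma cov_union: "cov \<eta> A K1 \<Longrightarrow> cov \<eta> B K2 \<Longrightarrow> cov \<eta> (A \<union> B) (K1 + K2)"
proof -
  assume "cov \<eta> A K1" "cov \<eta> B K2"
  then obtain F G where F: "finite F" "\<forall>U\<in>F. mutually_labeling \<eta> U" "A \<subseteq> \<Union>F" "real (card F) \<le> K1"
    and G: "finite G" "\<forall>U\<in>G. mutually_labeling \<eta> U" "B \<subseteq> \<Union>G" "real (card G) \<le> K2"
    unfolding cov_def by blast
  have "real (card (F \<union> G)) \<le> real (card F) + real (card G)"
    using card_Un_le[of F G] by linarith
  then show ?thesis unfolding cov_def using F G
    by (intro exI[of _ "F \<union> G"]) auto
qed

lemma cov_mono: "A \<subseteq> B \<Longrightarrow> cov \<eta> B K \<Longrightarrow> cov \<eta> A K"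
  unfolding cov_def by blast

lemma doubling_iter:
  fixes x :: "'a::metric_space"
  assumes "doubling_dim TYPE('a) d" "\<rho> > 0"
  shows "\<exists>G. finite G \<and> real (card G) \<le> (2 powr d) ^ k \<and> ball x \<rho> \<subseteq> (\<Union>z\<in>G. ball z (\<rho> / 2 ^ k))"
proof -
  have D: "\<And>(x::'a) r. r > 0 \<Longrightarrow> \<exists>F. finite F \<and> real (card F) \<le> 2 powr d \<and> ball x r \<subseteq> (\<Union>y\<in>F. ball y (r/2))"
    using assms(1) unfolding doubling_dim_def by blast
  show ?thesis
proof (induction k)
  case 0
  then show ?case by (intro exI[of _ "{x}"]) auto
next
  case (Suc k)
  then obtain G where G: "finite G" "real (card G) \<le> (2 powr d) ^ k" "ball x \<rho> \<subseteq> (\<Union>z\<in>G. ball z (\<rho> / 2 ^ k))"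
    by blast
  have "\<forall>z::'a. \<exists>H. finite H \<and> real (card H) \<le> 2 powr d \<and> ball z (\<rho> / 2 ^ k) \<subseteq> (\<Union>y\<in>H. ball y (\<rho> / 2 ^ k / 2))"
  proof
    fix z :: 'a
    have "\<rho> / 2 ^ k > 0" using assms(2) by simp
    then show "\<exists>H. finite H \<and> real (card H) \<le> 2 powr d \<and> ball z (\<rho> / 2 ^ k) \<subseteq> (\<Union>y\<in>H. ball y (\<rho> / 2 ^ k / 2))"
      by (rule D)
  qed
  then obtain H :: "'a \<Rightarrow> 'a set" where H: "\<And>z. finite (H z)" "\<And>z. real (card (H z)) \<le> 2 powr d"
     "\<And>z. ball z (\<rho> / 2 ^ k) \<subseteq> (\<Union>y\<in>H z. ball y (\<rho> / 2 ^ k / 2))"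
    by metis
  have "real (card (\<Union>z\<in>G. H z)) \<le> real (\<Sum>z\<in>G. card (H z))"
    using card_UN_le[OF G(1), of H] by linarith
  also have "\<dots> = (\<Sum>z\<in>G. real (card (H z)))" by simp
  also have "\<dots> \<le> (\<Sum>z\<in>G. 2 powr d)" by (rule sum_mono) (use H in auto)
  also have "\<dots> = real (card G) * 2 powr d" by simp
  also have "\<dots> \<le> (2 powr d) ^ k * 2 powr d" using G(2) by (intro mult_right_mono) auto
  also have "\<dots> = (2 powr d) ^ Suc k" by simp
  finally have c: "real (card (\<Union>z\<in>G. H z)) \<le> (2 powr d) ^ Suc k" .
  have "ball x \<rho> \<subseteq> (\<Union>z\<in>(\<Union>z\<in>G. H z). ball z (\<rho> / 2 ^ Suc k))"
  proof
    fix w assume "w \<in> ball x \<rho>"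
    then obtain z where "z \<in> G" "w \<in> ball z (\<rho> / 2 ^ k)" using G(3) by blast
    then obtain y where "y \<in> H z" "w \<in> ball y (\<rho> / 2 ^ k / 2)" using H(3) by blast
    then show "w \<in> (\<Union>z\<in>(\<Union>z\<in>G. H z). ball z (\<rho> / 2 ^ Suc k))"
      using \<open>z \<in> G\<close> by (auto simp: mult.commute)
  qed
  then show ?case using c G(1) H(1) by (intro exI[of _ "\<Union>z\<in>G. H z"]) simp
qed
qed


lemma cn_le:
  assumes "finite F" "A \<subseteq> (\<Union>x\<in>F. ball x s)"
  shows "covering_number s A \<le> ereal (real (card F))"
  unfolding covering_number_def by (rule INF_lower) (use assms in auto)

lemma cn_mono:
  assumes "s \<le> s'"
  shows "covering_number s' A \<le> covering_number s A"
  unfolding covering_number_def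
proof (rule INF_mono)
  fix m assume "m \<in> {F. finite F \<and> A \<subseteq> (\<Union>x\<in>F. ball x s)}"
  then have "m \<in> {F. finite F \<and> A \<subseteq> (\<Union>x\<in>F. ball x s')}"
    using assms by (auto dest!: subsetD)
  then show "\<exists>n\<in>{F. finite F \<and> A \<subseteq> (\<Union>x\<in>F. ball x s')}. ereal (real (card n)) \<le> ereal (real (card m))"
    by blast
qed

lemma cn_attained:
  fixes A :: "'a::metric_space set"
  assumes "finite F" "A \<subseteq> (\<Union>x\<in>F. ball x s)"
  shows "\<exists>F0. finite F0 \<and> A \<subseteq> (\<Union>x\<in>F0. ball x s) \<and> covering_number s A = ereal (real (card F0))"
proof -
  define P where "P n \<longleftrightarrow> (\<exists>F0. finite F0 \<and> A \<subseteq> (\<Union>x\<in>F0. ball x s) \<and> card F0 = n)" for n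
  have "P (card F)" using assms unfolding P_def by blast
  then have "P (LEAST n. P n)" by (rule LeastI)
  then obtain F0 where F0: "finite F0" "A \<subseteq> (\<Union>x\<in>F0. ball x s)" "card F0 = (LEAST n. P n)"
    unfolding P_def by blast
  have "covering_number s A = ereal (real (card F0))"
  proof (rule antisym)
    show "covering_number s A \<le> ereal (real (card F0))" by (rule cn_le[OF F0(1,2)])
    show "ereal (real (card F0)) \<le> covering_number s A"
      unfolding covering_number_def
    proof (rule INF_greatest)
      fix G assume "G \<in> {F. finite F \<and> A \<subseteq> (\<Union>x\<in>F. ball x s)}"
      then have "P (card G)" unfolding P_def by blast
      then have "card F0 \<le> card G" unfolding F0(3) by (rule Least_le)
      then show "ereal (real (card F0)) \<le> ereal (real (card G))" by simp
    qed
  qed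
  then show ?thesis using F0 by blast
qed

lemma margin_le:
  assumes "\<eta> w \<noteq> \<eta> y"
  shows "margin \<eta> y \<le> ereal (dist y w)"
  unfolding margin_def by (rule INF_lower) (use assms in auto)

lemma margin_nonneg: "0 \<le> margin \<eta> y"
  unfolding margin_def by (rule INF_greatest) auto

lemma dist_le_path_length:
  assumes "0 \<le> t" "t \<le> 1"
  shows "ereal (dist (g 0) (g t)) \<le> path_length g"
proof -
  define tt where "tt = (\<lambda>i::nat. if i = 0 then 0 else if i = 1 then t else (1::real))"
  have mem: "(tt, 2) \<in> {(t, n). t 0 = 0 \<and> t n = 1 \<and> (\<forall>i<n. t i \<le> t (Suc i))}"
    using assms unfolding tt_def by (auto simp: less_2_cases_iff)
  have "dist (g 0) (g t) \<le> (\<Sum>i<2. dist (g (tt i)) (g (tt (Suc i))))"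
    unfolding tt_def by (simp add: numeral_2_eq_2)
  also have "ereal \<dots> \<le> path_length g"
    unfolding path_length_def using SUP_upper[OF mem, of "\<lambda>tn. ereal (\<Sum>i<snd tn. dist (g (fst tn i)) (g (fst tn (Suc i))))"]
    by simp
  finally show ?thesis by simp
qed


lemma boundary_on_path:
  fixes \<gamma> :: "real \<Rightarrow> 'a::metric_space"
  assumes "path \<gamma>" "\<eta> (\<gamma> 1) \<noteq> \<eta> (\<gamma> 0)"
  shows "\<exists>t. 0 \<le> t \<and> t \<le> 1 \<and> \<gamma> t \<in> boundary \<eta>"
proof -
  define S where "S = {t\<in>{0..1}. \<eta> (\<gamma> t) \<noteq> \<eta> (\<gamma> 0)}"
  have "1 \<in> S" using assms unfolding S_def by auto
  then have Sne: "S \<noteq> {}" by auto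
  have bdd: "bdd_below S" unfolding S_def by (rule bdd_belowI[of _ 0]) auto
  define ts where "ts = Inf S"
  have ts0: "0 \<le> ts" unfolding ts_def by (rule cInf_greatest[OF Sne]) (auto simp: S_def)
  have ts1: "ts \<le> 1" unfolding ts_def by (rule cInf_lower[OF \<open>1 \<in> S\<close> bdd])
  have cont: "continuous_on {0..1} \<gamma>" using assms(1) unfolding path_def by simp
  have eps: "margin \<eta> (\<gamma> ts) \<le> 0 + ereal \<epsilon>" if "\<epsilon> > 0" for \<epsilon>
  proof -
    obtain \<delta> where \<delta>: "\<delta> > 0" "\<And>u. u \<in> {0..1} \<Longrightarrow> dist u ts < \<delta> \<Longrightarrow> dist (\<gamma> u) (\<gamma> ts) < \<epsilon>"
      using cont ts0 ts1 \<open>\<epsilon> > 0\<close> unfolding continuous_on_iff by (metis atLeastAtMost_iff)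
    obtain u where u: "u \<in> S" "u < ts + \<delta>"
      using cInf_lessD[OF Sne, of "ts + \<delta>"] \<delta>(1) unfolding ts_def by auto
    have "ts \<le> u" unfolding ts_def by (rule cInf_lower[OF u(1) bdd])
    then have du: "dist (\<gamma> u) (\<gamma> ts) < \<epsilon>" using u \<delta> by (intro \<delta>(2)) (auto simp: S_def dist_real_def)
    define u' where "u' = (if ts = 0 then 0 else ts - min \<delta> ts / 2)"
    have u'01: "u' \<in> {0..1}" using ts0 ts1 \<delta>(1) unfolding u'_def by auto
    have du': "dist (\<gamma> u') (\<gamma> ts) < \<epsilon>"
      using ts0 ts1 \<delta>(1) u'01 by (intro \<delta>(2)) (auto simp: u'_def dist_real_def)
    have lu': "\<eta> (\<gamma> u') = \<eta> (\<gamma> 0)"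
    proof (cases "ts = 0")
      case True then show ?thesis by (simp add: u'_def)
    next
      case False
      then have "u' < ts" using ts0 \<delta>(1) unfolding u'_def by auto
      then have "u' \<notin> S" using cInf_lower[OF _ bdd, of u'] unfolding ts_def by auto
      then show ?thesis using u'01 unfolding S_def by auto
    qed
    have lu: "\<eta> (\<gamma> u) \<noteq> \<eta> (\<gamma> 0)" using u(1) unfolding S_def by auto
    show ?thesis
    proof (cases "\<eta> (\<gamma> u) = \<eta> (\<gamma> ts)")
      case True
      then have "\<eta> (\<gamma> u') \<noteq> \<eta> (\<gamma> ts)" using lu lu' by simp
      then have "margin \<eta> (\<gamma> ts) \<le> ereal (dist (\<gamma> ts) (\<gamma> u'))" by (rule margin_le)
      moreover have "ereal (dist (\<gamma> ts) (\<gamma> u')) \<le> ereal \<epsilon>" using du' by (simp add: dist_commute)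
      ultimately have "margin \<eta> (\<gamma> ts) \<le> ereal \<epsilon>" by (rule order_trans)
      then show ?thesis by simp
    next
      case False
      then have "margin \<eta> (\<gamma> ts) \<le> ereal (dist (\<gamma> ts) (\<gamma> u))" by (rule margin_le)
      moreover have "ereal (dist (\<gamma> ts) (\<gamma> u)) \<le> ereal \<epsilon>" using du by (simp add: dist_commute)
      ultimately have "margin \<eta> (\<gamma> ts) \<le> ereal \<epsilon>" by (rule order_trans)
      then show ?thesis by simp
    qed
  qed
  have "margin \<eta> (\<gamma> ts) \<le> 0" by (rule ereal_le_epsilon2) (rule eps)
  then have "margin \<eta> (\<gamma> ts) = 0" using margin_nonneg[of \<eta> "\<gamma> ts"] by simp
  then show ?thesis using ts0 ts1 unfolding boundary_def by auto
qed

lemma margin_ge: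
  fixes x :: "'a::metric_space"
  assumes ls: "length_space TYPE('a)" and far: "\<And>b. b \<in> boundary \<eta> \<Longrightarrow> r \<le> dist b x"
  shows "ereal r \<le> margin \<eta> x"
  unfolding margin_def
proof (rule INF_greatest)
  fix x' assume "x' \<in> {x'. \<eta> x' \<noteq> \<eta> x}"
  then have ne: "\<eta> x' \<noteq> \<eta> x" by simp
  show "ereal r \<le> ereal (dist x x')"
  proof (rule ccontr)
    assume "\<not> ereal r \<le> ereal (dist x x')"
    then have "ereal (dist x x') < ereal r" by simp
    moreover have "ereal (dist x x') = (INF g \<in> {g. path g \<and> pathstart g = x \<and> pathfinish g = x'}. path_length g)"
      using ls unfolding length_space_def by blast
    ultimately obtain g where g: "path g" "pathstart g = x" "pathfinish g = x'" "path_length g < ereal r"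
      by (auto simp: INF_less_iff)
    have "\<eta> (g 1) \<noteq> \<eta> (g 0)" using g ne by (simp add: pathstart_def pathfinish_def)
    then obtain t where t: "0 \<le> t" "t \<le> 1" "g t \<in> boundary \<eta>"
      using boundary_on_path[OF g(1)] by blast
    have "ereal (dist (g 0) (g t)) \<le> path_length g" by (rule dist_le_path_length[OF t(1,2)])
    then have "ereal (dist x (g t)) \<le> path_length g" using g(2) by (simp add: pathstart_def)
    then have "ereal (dist x (g t)) < ereal r" using g(4) by (rule le_less_trans)
    then have "dist x (g t) < r" by simp
    moreover have "r \<le> dist (g t) x" by (rule far[OF t(3)])
    ultimately show False by (simp add: dist_commute)
  qed
qed


lemma univ_cover:
  assumes dd: "doubling_dim TYPE('a::metric_space) d" and R: "\<And>x y::'a. dist x y \<le> R"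
    and s: "(R + 1) / 2 ^ k \<le> s"
  shows "\<exists>F. finite F \<and> real (card F) \<le> (2 powr d) ^ k \<and> (UNIV::'a set) \<subseteq> (\<Union>y\<in>F. ball y s)"
proof -
  fix x0 :: 'a
  have "R \<ge> 0" using R[of x0 x0] by simp
  then obtain G where G: "finite G" "real (card G) \<le> (2 powr d) ^ k" "ball x0 (R + 1) \<subseteq> (\<Union>z\<in>G. ball z ((R + 1) / 2 ^ k))"
    using doubling_iter[OF dd, where \<rho>="R + 1" and x=x0 and k=k] by auto
  have "(UNIV::'a set) \<subseteq> ball x0 (R + 1)"
  proof
    fix x :: 'a show "x \<in> ball x0 (R + 1)" using R[of x0 x] by simp
  qed
  also have "\<dots> \<subseteq> (\<Union>y\<in>G. ball y s)"
  proof
    fix w assume "w \<in> ball x0 (R + 1)"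
    then obtain z where "z \<in> G" "dist z w < (R + 1) / 2 ^ k" using G(3) by auto
    then have "z \<in> G" "dist z w < s" using s by auto
    then show "w \<in> (\<Union>y\<in>G. ball y s)" by auto
  qed
  finally show ?thesis using G by blast
qed

lemma scale_cov:
  fixes \<eta> :: "'a::metric_space \<Rightarrow> 'b"
  assumes dd: "doubling_dim TYPE('a) d" and ls: "length_space TYPE('a)" and s: "s > 0"
    and F0: "finite F0" "boundary \<eta> \<subseteq> (\<Union>y\<in>F0. ball y s)"
  shows "cov \<eta> ((UNIV - thicken (boundary \<eta>) s) - (UNIV - thicken (boundary \<eta>) (2 * s)))
           ((2 powr d) ^ 4 * real (card F0))"
proof -
  define V where "V = UNIV - thicken (boundary \<eta>) s"
  have "\<forall>y::'a. \<exists>G. finite G \<and> real (card G) \<le> (2 powr d) ^ 4 \<and> ball y (3 * s) \<subseteq> (\<Union>z\<in>G. ball z (3 * s / 2 ^ 4))"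
  proof
    fix y :: 'a
    have "3 * s > 0" using s by simp
    from doubling_iter[OF dd this, where x=y and k=4]
    show "\<exists>G. finite G \<and> real (card G) \<le> (2 powr d) ^ 4 \<and> ball y (3 * s) \<subseteq> (\<Union>z\<in>G. ball z (3 * s / 2 ^ 4))" .
  qed
  then obtain G :: "'a \<Rightarrow> 'a set" where G: "\<And>y. finite (G y)" "\<And>y. real (card (G y)) \<le> (2 powr d) ^ 4"
    "\<And>y. ball y (3 * s) \<subseteq> (\<Union>z\<in>G y. ball z (3 * s / 2 ^ 4))"
    by metis
  define Z where "Z = (\<Union>y\<in>F0. G y)"
  define Fam where "Fam = (\<lambda>z. ball z (3 * s / 16) \<inter> V) ` Z"
  have finZ: "finite Z" unfolding Z_def using F0(1) G(1) by blast
  have "real (card Fam) \<le> real (card Z)" unfolding Fam_def using card_image_le[OF finZ] by simp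
  also have "\<dots> \<le> real (\<Sum>y\<in>F0. card (G y))" unfolding Z_def using card_UN_le[OF F0(1), of G] by linarith
  also have "\<dots> = (\<Sum>y\<in>F0. real (card (G y)))" by simp
  also have "\<dots> \<le> (\<Sum>y\<in>F0. (2 powr d) ^ 4)" by (rule sum_mono) (use G in auto)
  also have "\<dots> = (2 powr d) ^ 4 * real (card F0)" by simp
  finally have card: "real (card Fam) \<le> (2 powr d) ^ 4 * real (card F0)" .
  have MLU: "mutually_labeling \<eta> U" if "U \<in> Fam" for U
  proof -
    obtain z where U: "U = ball z (3 * s / 16) \<inter> V" using \<open>U \<in> Fam\<close> unfolding Fam_def by blast
    have sup: "(SUP z1\<in>U. SUP z2\<in>U. ereal (dist z1 z2)) \<le> ereal (6 * s / 16)"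
    proof (intro SUP_least)
      fix z1 z2 assume "z1 \<in> U" "z2 \<in> U"
      then have "dist z z1 < 3 * s / 16" "dist z z2 < 3 * s / 16" unfolding U by auto
      then have "dist z1 z2 \<le> 6 * s / 16" using dist_triangle[of z1 z2 z] by (simp add: dist_commute)
      then show "ereal (dist z1 z2) \<le> ereal (6 * s / 16)" by simp
    qed
    show ?thesis unfolding mutually_labeling_def
    proof
      fix w assume "w \<in> U"
      then have "w \<in> V" unfolding U by auto
      then have far: "s \<le> dist b w" if "b \<in> boundary \<eta>" for b
        using that unfolding V_def thicken_def by (auto simp: not_less)
      have "ereal s \<le> margin \<eta> w" by (rule margin_ge[OF ls far])
      moreover have "ereal (6 * s / 16) < ereal s" using s by simp
      ultimately show "(SUP z1\<in>U. SUP z2\<in>U. ereal (dist z1 z2)) < margin \<eta> w"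
        using sup by (meson le_less_trans less_le_trans)
    qed
  qed
  have cover: "V - (UNIV - thicken (boundary \<eta>) (2 * s)) \<subseteq> \<Union>Fam"
  proof
    fix x assume x: "x \<in> V - (UNIV - thicken (boundary \<eta>) (2 * s))"
    then obtain b where b: "b \<in> boundary \<eta>" "dist b x < 2 * s" unfolding thicken_def by auto
    then obtain y where y: "y \<in> F0" "dist y b < s" using F0(2) by auto
    have "dist y x < 3 * s" using dist_triangle[of y x b] b y by simp
    then have "x \<in> ball y (3 * s)" by simp
    then obtain z where z: "z \<in> G y" "x \<in> ball z (3 * s / 2 ^ 4)" using G(3)[of y] by blast
    have "z \<in> Z" unfolding Z_def using y z by blast
    moreover have "x \<in> ball z (3 * s / 16) \<inter> V" using z x by simp
    ultimately show "x \<in> \<Union>Fam" unfolding Fam_def by blast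
  qed
  have "finite Fam" unfolding Fam_def using finZ by simp
  then show ?thesis unfolding cov_def V_def[symmetric] using card MLU cover by blast
qed


lemma tele_cov:
  fixes \<eta> :: "'a::metric_space \<Rightarrow> 'b"
  assumes dd: "doubling_dim TYPE('a) d" and ls: "length_space TYPE('a)" and r: "r > 0"
    and h: "\<And>s. s > 0 \<Longrightarrow> \<exists>F0. finite F0 \<and> boundary \<eta> \<subseteq> (\<Union>y\<in>F0. ball y s) \<and> real (card F0) = h s"
  shows "cov \<eta> ((UNIV - thicken (boundary \<eta>) r) - (UNIV - thicken (boundary \<eta>) (r * 2 ^ n)))
           (\<Sum>j<n. (2 powr d) ^ 4 * h (r * 2 ^ j))"
proof (induction n)
  case 0
  show ?case unfolding cov_def by (intro exI[of _ "{}"]) auto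
next
  case (Suc n)
  define s where "s = r * 2 ^ n"
  have s: "s > 0" using r unfolding s_def by simp
  obtain F0 where F0: "finite F0" "boundary \<eta> \<subseteq> (\<Union>y\<in>F0. ball y s)" "real (card F0) = h s"
    using h[OF s] by blast
  have "cov \<eta> ((UNIV - thicken (boundary \<eta>) s) - (UNIV - thicken (boundary \<eta>) (2 * s)))
           ((2 powr d) ^ 4 * h s)"
    using scale_cov[OF dd ls s F0(1,2)] F0(3) by simp
  from cov_union[OF Suc.IH this]
  have "cov \<eta> (((UNIV - thicken (boundary \<eta>) r) - (UNIV - thicken (boundary \<eta>) (r * 2 ^ n))) \<union>
     ((UNIV - thicken (boundary \<eta>) s) - (UNIV - thicken (boundary \<eta>) (2 * s))))
     ((\<Sum>j<n. (2 powr d) ^ 4 * h (r * 2 ^ j)) + (2 powr d) ^ 4 * h s)" .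
  moreover have "(UNIV - thicken (boundary \<eta>) r) - (UNIV - thicken (boundary \<eta>) (r * 2 ^ Suc n)) \<subseteq>
     ((UNIV - thicken (boundary \<eta>) r) - (UNIV - thicken (boundary \<eta>) (r * 2 ^ n))) \<union>
     ((UNIV - thicken (boundary \<eta>) s) - (UNIV - thicken (boundary \<eta>) (2 * s)))"
    unfolding s_def by (auto simp: mult.commute mult.left_commute)
  ultimately show ?case unfolding s_def by (auto intro: cov_mono)
qed


theorem proposition4:
  fixes \<nu> :: "'a::metric_space measure"
    and \<eta> :: "'a \<Rightarrow> 'b"
    and d R :: real
  assumes "length_space TYPE('a)"
    and "bounded (UNIV :: 'a set)"
    and "doubling_dim TYPE('a) d"
    and "R = diameter (UNIV :: 'a set)"
    and "sets \<nu> = sets borel" and "finite_measure \<nu>"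
    and "\<eta> \<in> borel \<rightarrow>\<^sub>M count_space UNIV"
    and "boundary \<eta> \<in> null_sets \<nu>"
    and "boundary \<eta> \<noteq> {}"
    and "c > 0"
  shows "\<exists>C>0. \<forall>r>0. N_ML \<eta> (UNIV - thicken (boundary \<eta>) r)
           \<le> ereal (C * R powr (4 * d) * r powr (- (real_of_ereal (box_dim (boundary \<eta>)) + c)))"
proof -
  note ls = assms(1) and dd = assms(3) and bne = assms(9) and c = assms(10)
  define B where "B = boundary \<eta>"
  have Rb: "dist x y \<le> R" for x y :: 'a
    using diameter_bounded_bound[OF assms(2)] assms(4) by simp
  obtain b0 where b0: "b0 \<in> B" using bne unfolding B_def by blast
  have Rpos: "R > 0"
  proof -
    have "margin \<eta> b0 = 0" using b0 unfolding B_def boundary_def by simp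
    have "{x'. \<eta> x' \<noteq> \<eta> b0} \<noteq> {}"
    proof
      assume "{x'. \<eta> x' \<noteq> \<eta> b0} = {}"
      then have "margin \<eta> b0 = top" unfolding margin_def by simp
      with \<open>margin \<eta> b0 = 0\<close> show False by (simp add: top_ereal_def)
    qed
    then obtain x' where "\<eta> x' \<noteq> \<eta> b0" by blast
    then have "x' \<noteq> b0" by auto
    then have "0 < dist x' b0" by simp
    then show ?thesis using Rb[of x' b0] by linarith
  qed
  have d0: "d \<ge> 0"
  proof -
    obtain F where F: "finite F" "real (card F) \<le> 2 powr d" "ball b0 1 \<subseteq> (\<Union>y\<in>F. ball y (1/2))"
      using dd unfolding doubling_dim_def by (meson zero_less_one)
    have "F \<noteq> {}" using F(3) by (metis UN_empty centre_in_ball empty_iff subsetD zero_less_one)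
    then have "card F \<ge> 1" using F(1) by (simp add: Suc_leI card_gt_0_iff)
    then have "1 \<le> 2 powr d" using F(2) by simp
    then show ?thesis by (metis not_le powr_less_one one_less_numeral_iff semiring_norm(76))
  qed
  define M where "M = (2 powr d) ^ 4"
  have Mpos: "M > 0" unfolding M_def by simp
  have ucov: "\<exists>F. finite F \<and> real (card F) \<le> (2 powr d) ^ k \<and> (UNIV::'a set) \<subseteq> (\<Union>y\<in>F. ball y s)"
    if "(R + 1) / 2 ^ k \<le> s" for k s
    by (rule univ_cover[OF dd Rb that])
  have exk: "\<exists>k. (R + 1) / 2 ^ k \<le> s" if "s > 0" for s
  proof -
    obtain k where "(R + 1) / s < 2 ^ k" using real_arch_pow[of 2 "(R + 1) / s"] by auto
    then have "(R + 1) / 2 ^ k \<le> s" using that by (simp add: field_simps)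
    then show ?thesis by blast
  qed
  define h where "h s = real_of_ereal (covering_number s B)" for s
  have hF: "\<exists>F0. finite F0 \<and> B \<subseteq> (\<Union>y\<in>F0. ball y s) \<and> real (card F0) = h s
      \<and> covering_number s B = ereal (h s)" if s0: "s > 0" for s
  proof -
    obtain k where "(R + 1) / 2 ^ k \<le> s" using exk[OF s0] by blast
    then obtain F where "finite F" "(UNIV::'a set) \<subseteq> (\<Union>y\<in>F. ball y s)" using ucov by blast
    then have "B \<subseteq> (\<Union>y\<in>F. ball y s)" by blast
    from cn_attained[OF \<open>finite F\<close> this] obtain F0 where
      "finite F0" "B \<subseteq> (\<Union>x\<in>F0. ball x s)" "covering_number s B = ereal (real (card F0))" by blast
    then show ?thesis unfolding h_def by auto
  qed
  have h1: "h s \<ge> 1" if s0: "s > 0" for s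
  proof -
    obtain F0 where "finite F0" "B \<subseteq> (\<Union>y\<in>F0. ball y s)" "real (card F0) = h s" using hF[OF s0] by blast
    then have "F0 \<noteq> {}" using b0 by auto
    then show ?thesis using \<open>finite F0\<close> \<open>real (card F0) = h s\<close> by (metis One_nat_def card_gt_0_iff of_nat_1 of_nat_le_iff Suc_leI)
  qed
  have hmono: "h s' \<le> h s" if "0 < s" "s \<le> s'" for s s'
  proof -
    have "covering_number s' B \<le> covering_number s B" by (rule cn_mono[OF that(2)])
    then show ?thesis using hF[OF that(1)] hF[of s'] that by auto
  qed
  define f where "f s = (if covering_number s B = \<infinity> then \<infinity>
      else ereal (ln (real_of_ereal (covering_number s B)) / ln (1 / s)))" for s
  have bd: "box_dim B = Limsup (at_right 0) f" unfolding box_dim_def f_def by simp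
  have fs: "f s = ereal (ln (h s) / ln (1 / s))" if "s > 0" for s
    using hF[OF that] unfolding f_def h_def by auto
  have ev_pos: "eventually (\<lambda>s. 0 < s \<and> s < 1) (at_right (0::real))"
    unfolding eventually_at_right_field by (intro exI[of _ 1]) auto
  have "eventually (\<lambda>s. 0 \<le> f s) (at_right 0)"
    using ev_pos
  proof (rule eventually_mono)
    fix s :: real assume s: "0 < s \<and> s < 1"
    have "ln (h s) \<ge> 0" using h1[of s] s by simp
    moreover have "ln (1 / s) > 0" using s by (simp add: ln_div)
    ultimately show "0 \<le> f s" using fs[of s] s by simp
  qed
  then have Bd0: "0 \<le> box_dim B" unfolding bd by (intro le_Limsup) auto
  have "eventually (\<lambda>s. 0 < s \<and> s < 1 / (2 * (R + 1))) (at_right (0::real))"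
    unfolding eventually_at_right_field using Rpos by (intro exI[of _ "1 / (2 * (R + 1))"]) auto
  then have "eventually (\<lambda>s. f s \<le> ereal (2 * d)) (at_right 0)"
  proof (rule eventually_mono)
    fix s :: real assume s: "0 < s \<and> s < 1 / (2 * (R + 1))"
    then have s0: "s > 0" by simp
    have s1: "2 * (R + 1) < 1 / s" using s Rpos by (simp add: field_simps)
    have "2 * (R + 1) \<ge> 1" using Rpos by simp
    then have "1 < 1 / s" using s1 by linarith
    then have s2: "s < 1" using s0 by (simp add: field_simps)
    define L where "L = log 2 ((R + 1) / s)"
    have Rs: "(R + 1) / s > 1" using s2 Rpos s0 by (simp add: field_simps)
    have L0: "L > 0" unfolding L_def using Rs by simp
    define k where "k = nat \<lceil>L\<rceil>"
    have kL: "L \<le> real k" "real k \<le> L + 1" unfolding k_def using L0 by linarith+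
    have "(R + 1) / s = 2 powr L" unfolding L_def using Rs by simp
    also have "\<dots> \<le> 2 powr (real k)" using kL by simp
    also have "\<dots> = 2 ^ k" by (simp add: powr_realpow)
    finally have "(R + 1) / 2 ^ k \<le> s" using s0 by (simp add: field_simps)
    then obtain F where F: "finite F" "real (card F) \<le> (2 powr d) ^ k" "(UNIV::'a set) \<subseteq> (\<Union>y\<in>F. ball y s)"
      using ucov by blast
    have "B \<subseteq> (\<Union>y\<in>F. ball y s)" using F(3) by blast
    then have "covering_number s B \<le> ereal (real (card F))" by (rule cn_le[OF F(1)])
    then have "ereal (h s) \<le> ereal (real (card F))" using hF[OF s0] by auto
    then have "h s \<le> (2 powr d) ^ k" using F(2) by simp
    then have "ln (h s) \<le> ln ((2 powr d) ^ k)" using h1[OF s0] by simp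
    also have "\<dots> = real k * d * ln 2" by (simp add: ln_realpow)
    also have "\<dots> \<le> (L + 1) * d * ln 2" using kL d0 by (intro mult_right_mono) auto
    also have "\<dots> = ln ((R + 1) / s) * d + d * ln 2"
      unfolding L_def using Rs by (simp add: log_def algebra_simps)
    also have "\<dots> = d * (ln (2 * (R + 1)) + ln (1 / s))"
    proof -
      have "ln (2 * (R + 1)) = ln 2 + ln (R + 1)" using Rpos by (intro ln_mult_pos) auto
      moreover have "ln ((R + 1) / s) = ln (R + 1) + ln (1 / s)" using Rpos s0 by (simp add: ln_div)
      ultimately show ?thesis by (simp add: algebra_simps)
    qed
    also have "\<dots> \<le> d * (2 * ln (1 / s))"
    proof -
      have "ln (2 * (R + 1)) \<le> ln (1 / s)" using s1 Rpos s0 by (subst ln_le_cancel_iff) auto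
      then show ?thesis using d0 by (intro mult_left_mono) auto
    qed
    finally have lh: "ln (h s) \<le> 2 * d * ln (1 / s)" by simp
    have "ln (1 / s) > 0" using s0 s2 by (simp add: ln_div)
    then have "ln (h s) / ln (1 / s) \<le> 2 * d" using lh by (simp add: divide_le_eq)
    then show "f s \<le> ereal (2 * d)" using fs[OF s0] by simp
  qed
  then have Bd1: "box_dim B \<le> ereal (2 * d)" unfolding bd by (rule Limsup_bounded)
  obtain b where bB: "box_dim B = ereal b" and b0': "b \<ge> 0"
    using Bd0 Bd1 by (cases "box_dim B") auto
  define e where "e = b + c"
  have e0: "e > 0" unfolding e_def using b0' c by simp
  have "Limsup (at_right 0) f < ereal e" using bB e_def c bd by simp
  then have "eventually (\<lambda>s. f s < ereal e) (at_right 0)" by (rule Limsup_lessD)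
  then have "eventually (\<lambda>s. (0 < s \<and> s < 1) \<and> f s < ereal e) (at_right 0)"
    using ev_pos by (simp add: eventually_conj_iff)
  then obtain r0 where r0: "r0 > 0" "\<And>s. 0 < s \<Longrightarrow> s < r0 \<Longrightarrow> (0 < s \<and> s < 1) \<and> f s < ereal e"
    unfolding eventually_at_right_field by auto
  have hsmall: "h s \<le> s powr (- e)" if s: "0 < s" "s < r0" for s
  proof -
    have s1: "s < 1" and fe: "f s < ereal e" using r0(2)[OF s] by auto
    have l0: "ln (1 / s) > 0" using s s1 by (simp add: ln_div)
    have "ln (h s) / ln (1 / s) < e" using fe fs[OF s(1)] by simp
    then have "ln (h s) < e * ln (1 / s)" using l0 by (simp add: divide_less_eq)
    also have "\<dots> = ln (s powr (- e))" using s by (simp add: ln_div)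
    finally have "ln (h s) < ln (s powr (- e))" .
    then have "h s < s powr (- e)" using h1[OF s(1)] s by (subst (asm) ln_less_cancel_iff) auto
    then show ?thesis by simp
  qed
  define s1 where "s1 = r0 / 2"
  have s1: "0 < s1" "s1 < r0" using r0 unfolding s1_def by auto
  define A where "A = max 1 (h s1 * R powr e)"
  have A1: "A \<ge> 1" unfolding A_def by simp
  have hA: "h s \<le> A * s powr (- e)" if s: "0 < s" "s \<le> R" for s
  proof (cases "s < r0")
    case True
    then have "h s \<le> s powr (- e)" using hsmall s by simp
    also have "\<dots> \<le> A * s powr (- e)" using A1 mult_right_mono[OF A1, of "s powr (- e)"] by simp
    finally show ?thesis .
  next
    case False
    then have "s1 \<le> s" using s1 by simp
    then have "h s \<le> h s1" using hmono s1 by simp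
    also have "\<dots> = h s1 * R powr e * R powr (- e)" using Rpos by (simp add: powr_minus field_simps)
    also have "\<dots> \<le> h s1 * R powr e * s powr (- e)"
    proof -
      have "R powr (- e) \<le> s powr (- e)" using e0 s by (intro powr_mono2') auto
      moreover have "h s1 * R powr e \<ge> 0" using h1[OF s1(1)] by simp
      ultimately show ?thesis by (intro mult_left_mono) auto
    qed
    also have "\<dots> \<le> A * s powr (- e)" unfolding A_def by (intro mult_right_mono) auto
    finally show ?thesis .
  qed
  define q where "q = (2::real) powr (- e)"
  have q: "0 < q" "q < 1" unfolding q_def using e0 by (auto intro: powr_less_one)
  define C where "C = M * A / (1 - q) / R powr (4 * d)"
  have C0: "C > 0" unfolding C_def using Mpos A1 q Rpos by simp
  have rb: "real_of_ereal (box_dim (boundary \<eta>)) = b" using bB unfolding B_def by simp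
  show ?thesis
  proof (intro exI[of _ C] conjI allI impI C0)
    fix r :: real assume r: "r > 0"
    have exn: "\<exists>n. R < r * 2 ^ n"
    proof -
      obtain n where "R / r < 2 ^ n" using real_arch_pow[of 2 "R / r"] by auto
      then show ?thesis using r by (auto simp: field_simps)
    qed
    define n where "n = (LEAST n. R < r * 2 ^ n)"
    have hn: "R < r * 2 ^ n" unfolding n_def using exn by (rule LeastI_ex)
    have hj: "r * 2 ^ j \<le> R" if "j < n" for j
      using not_less_Least[OF that[unfolded n_def]] by simp
    have th: "thicken B (r * 2 ^ n) = UNIV"
    proof -
      have "x \<in> ball b0 (r * 2 ^ n)" for x using Rb[of b0 x] hn by simp
      then show ?thesis unfolding thicken_def using b0 by blast
    qed
    have hyp: "\<exists>F0. finite F0 \<and> boundary \<eta> \<subseteq> (\<Union>y\<in>F0. ball y s) \<and> real (card F0) = h s" if "s > 0" for s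
      using hF[OF that] unfolding B_def by blast
    have "cov \<eta> ((UNIV - thicken (boundary \<eta>) r) - (UNIV - thicken (boundary \<eta>) (r * 2 ^ n)))
           (\<Sum>j<n. (2 powr d) ^ 4 * h (r * 2 ^ j))"
      by (rule tele_cov[OF dd ls r hyp])
    then have "cov \<eta> (UNIV - thicken (boundary \<eta>) r) (\<Sum>j<n. M * h (r * 2 ^ j))"
      using th unfolding B_def M_def by simp
    then have N: "N_ML \<eta> (UNIV - thicken (boundary \<eta>) r) \<le> ereal (\<Sum>j<n. M * h (r * 2 ^ j))"
      by (rule cov_N_ML)
    have pw: "(r * 2 ^ j) powr (- e) = r powr (- e) * q ^ j" for j :: nat
    proof -
      have "(r * 2 ^ j) powr (- e) = r powr (- e) * (2 ^ j) powr (- e)" using r by (simp add: powr_mult)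
      have a: "(2::real) ^ j = 2 powr (real j)" by (simp add: powr_realpow)
      have b: "(2 powr (real j)) powr (- e) = q ^ j" unfolding q_def by (simp add: powr_powr powr_power)
      have "r powr (- e) * (2 ^ j) powr (- e) = r powr (- e) * q ^ j" by (simp only: a b)
      then show ?thesis using \<open>(r * 2 ^ j) powr (- e) = r powr (- e) * (2 ^ j) powr (- e)\<close> by simp
    qed
    have "(\<Sum>j<n. M * h (r * 2 ^ j)) \<le> (\<Sum>j<n. M * (A * (r * 2 ^ j) powr (- e)))"
      using hA hj r Mpos by (intro sum_mono mult_left_mono) auto
    also have "\<dots> = M * A * r powr (- e) * (\<Sum>j<n. q ^ j)"
      by (simp add: pw sum_distrib_left algebra_simps)
    also have "(\<Sum>j<n. q ^ j) = (1 - q ^ n) / (1 - q)" using q by (simp add: sum_gp_strict)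
    also have "M * A * r powr (- e) * ((1 - q ^ n) / (1 - q)) \<le> M * A * r powr (- e) * (1 / (1 - q))"
      using q Mpos A1 by (intro mult_left_mono divide_right_mono) auto
    also have "\<dots> = C * R powr (4 * d) * r powr (- (real_of_ereal (box_dim (boundary \<eta>)) + c))"
      unfolding C_def rb e_def using q Rpos by simp
    finally show "N_ML \<eta> (UNIV - thicken (boundary \<eta>) r)
           \<le> ereal (C * R powr (4 * d) * r powr (- (real_of_ereal (box_dim (boundary \<eta>)) + c)))"
      using N by (meson ereal_less_eq(3) order_trans)
  qed
qed

end
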